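(* Fix $\gamma\in\mathbb{R}$. Let $G$ be the directed graph whose vertices are the species $1,\dots,s_0$, with a directed edge from $i$ to $j$ whenever there is a reaction $k$ with $\zeta_{ik}<0$ and $\zeta_{jk}>0$, and let $G_1,\dots,G_p$ be its maximal strongly connected subgraphs (single vertices count as strongly connected). Let $\theta\in[0,\infty)^{s_0}$ and write $\theta=\sum_{j=1}^m\theta^j$ with $\theta^j\in[0,\infty)^{s_0}$, where $\mathrm{supp}(\theta^j)$ is contained in the vertex set of a maximal strongly connected subgraph $G_{i_j}$ and $G_{i_j}\ne G_{i_l}$ for $j\neq l$. Then: (i) if Condition 3.2 holds at $\gamma$ for each $\theta^j$, it holds at $\gamma$ for $\theta$; (ii) if the balance equation (B) holds for each $\theta^j$, then (B) holds for $\theta$; (iii) if the time-scale constraint (T) at $\gamma$ holds for each $\theta^j$, then (T) at $\gamma$ holds for $\theta$. Consequently, if Condition 3.2 (resp. (B), resp. (T) at $\gamma$) holds for every $\theta\in[0,\infty)^{s_0}$ whose support lies in the vertex set of some strongly connected subgraph of $G$, then it holds for every $\theta\in[0,\infty)^{s_0}$.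
   Context: Fix integers $s_0,r_0\ge 1$ and, for $k=1,\dots,r_0$, vectors $\nu_k,\nu_k'\in\mathbb{N}^{s_0}$ (reactant and product vectors of reaction $k$); set $\zeta_k=\nu_k'-\nu_k$. Fix $\alpha\in[0,\infty)^{s_0}$ and $\beta\in\mathbb{R}^{r_0}$ and set $\rho_k=\beta_k+\nu_k\cdot\alpha$. For $\theta\in[0,\infty)^{s_0}$ let $\Gamma_\theta^+=\{k:\theta\cdot\zeta_k>0\}$, $\Gamma_\theta^-=\{k:\theta\cdot\zeta_k<0\}$ and $\mathrm{supp}(\theta)=\{i:\theta_i>0\}$. A maximum over the empty set is $-\infty$. For $\theta\in[0,\infty)^{s_0}$ and $\gamma\in\mathbb{R}$: the balance equation for $\theta$ is (B) $\max_{k\in\Gamma_\theta^-}\rho_k=\max_{k\in\Gamma_\theta^+}\rho_k$; the time-scale constraint for $\theta$ at $\gamma$ is (T) $\gamma\le\max_{i:\theta_i>0}\alpha_i-\max_{k\in\Gamma_\theta^+\cup\Gamma_\theta^-}\rho_k$; Condition 3.2 holds for $\theta$ at $\gamma$ if (B) or (T) holds. *)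

theory Defs
  imports Complex_Main "HOL-Library.Extended_Real"
begin

text \<open>Species are indexed by 0..<s0, reactions by 0..<r0.
  nu k i / nu' k i are the i-th entries of the reactant/product vectors of reaction k.
  Vectors in R^s0 are functions nat => real of which only the entries i < s0 matter.\<close>

definition zeta :: "(nat \<Rightarrow> nat \<Rightarrow> nat) \<Rightarrow> (nat \<Rightarrow> nat \<Rightarrow> nat) \<Rightarrow> nat \<Rightarrow> nat \<Rightarrow> real" where
  "zeta nu nu' k i = real (nu' k i) - real (nu k i)"

definition rho :: "nat \<Rightarrow> (nat \<Rightarrow> nat \<Rightarrow> nat) \<Rightarrow> (nat \<Rightarrow> real) \<Rightarrow> (nat \<Rightarrow> real) \<Rightarrow> nat \<Rightarrow> real" where
  "rho s0 nu alpha beta k = beta k + (\<Sum>i<s0. real (nu k i) * alpha i)"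

definition dotz :: "nat \<Rightarrow> (nat \<Rightarrow> nat \<Rightarrow> nat) \<Rightarrow> (nat \<Rightarrow> nat \<Rightarrow> nat) \<Rightarrow> (nat \<Rightarrow> real) \<Rightarrow> nat \<Rightarrow> real" where
  "dotz s0 nu nu' theta k = (\<Sum>i<s0. theta i * zeta nu nu' k i)"

definition Gamma_plus :: "nat \<Rightarrow> nat \<Rightarrow> (nat \<Rightarrow> nat \<Rightarrow> nat) \<Rightarrow> (nat \<Rightarrow> nat \<Rightarrow> nat) \<Rightarrow> (nat \<Rightarrow> real) \<Rightarrow> nat set" where
  "Gamma_plus s0 r0 nu nu' theta = {k. k < r0 \<and> dotz s0 nu nu' theta k > 0}"

definition Gamma_minus :: "nat \<Rightarrow> nat \<Rightarrow> (nat \<Rightarrow> nat \<Rightarrow> nat) \<Rightarrow> (nat \<Rightarrow> nat \<Rightarrow> nat) \<Rightarrow> (nat \<Rightarrow> real) \<Rightarrow> nat set" where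
  "Gamma_minus s0 r0 nu nu' theta = {k. k < r0 \<and> dotz s0 nu nu' theta k < 0}"

definition supp :: "nat \<Rightarrow> (nat \<Rightarrow> real) \<Rightarrow> nat set" where
  "supp s0 theta = {i. i < s0 \<and> theta i > 0}"

definition nonneg_vec :: "nat \<Rightarrow> (nat \<Rightarrow> real) \<Rightarrow> bool" where
  "nonneg_vec s0 theta \<longleftrightarrow> (\<forall>i<s0. 0 \<le> theta i)"

text \<open>Maxima are taken in the extended reals; the maximum (supremum) over the empty set is -\<infinity>.\<close>

definition balance_eq ::
  "nat \<Rightarrow> nat \<Rightarrow> (nat \<Rightarrow> nat \<Rightarrow> nat) \<Rightarrow> (nat \<Rightarrow> nat \<Rightarrow> nat) \<Rightarrow> (nat \<Rightarrow> real) \<Rightarrow> (nat \<Rightarrow> real)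
    \<Rightarrow> (nat \<Rightarrow> real) \<Rightarrow> bool" where
  "balance_eq s0 r0 nu nu' alpha beta theta \<longleftrightarrow>
     (SUP k\<in>Gamma_minus s0 r0 nu nu' theta. ereal (rho s0 nu alpha beta k))
   = (SUP k\<in>Gamma_plus s0 r0 nu nu' theta. ereal (rho s0 nu alpha beta k))"

definition time_scale ::
  "nat \<Rightarrow> nat \<Rightarrow> (nat \<Rightarrow> nat \<Rightarrow> nat) \<Rightarrow> (nat \<Rightarrow> nat \<Rightarrow> nat) \<Rightarrow> (nat \<Rightarrow> real) \<Rightarrow> (nat \<Rightarrow> real)
    \<Rightarrow> real \<Rightarrow> (nat \<Rightarrow> real) \<Rightarrow> bool" where
  "time_scale s0 r0 nu nu' alpha beta gamma theta \<longleftrightarrow>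
     ereal gamma \<le> (SUP i\<in>supp s0 theta. ereal (alpha i))
       - (SUP k\<in>Gamma_plus s0 r0 nu nu' theta \<union> Gamma_minus s0 r0 nu nu' theta.
            ereal (rho s0 nu alpha beta k))"

definition cond32 ::
  "nat \<Rightarrow> nat \<Rightarrow> (nat \<Rightarrow> nat \<Rightarrow> nat) \<Rightarrow> (nat \<Rightarrow> nat \<Rightarrow> nat) \<Rightarrow> (nat \<Rightarrow> real) \<Rightarrow> (nat \<Rightarrow> real)
    \<Rightarrow> real \<Rightarrow> (nat \<Rightarrow> real) \<Rightarrow> bool" where
  "cond32 s0 r0 nu nu' alpha beta gamma theta \<longleftrightarrow>
     balance_eq s0 r0 nu nu' alpha beta theta \<or> time_scale s0 r0 nu nu' alpha beta gamma theta"

definition species_edge :: "nat \<Rightarrow> nat \<Rightarrow> (nat \<Rightarrow> nat \<Rightarrow> nat) \<Rightarrow> (nat \<Rightarrow> nat \<Rightarrow> nat) \<Rightarrow> nat \<Rightarrow> nat \<Rightarrow> bool" where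
  "species_edge s0 r0 nu nu' i j \<longleftrightarrow> i < s0 \<and> j < s0 \<and>
     (\<exists>k<r0. zeta nu nu' k i < 0 \<and> zeta nu nu' k j > 0)"

definition scc :: "nat \<Rightarrow> nat \<Rightarrow> (nat \<Rightarrow> nat \<Rightarrow> nat) \<Rightarrow> (nat \<Rightarrow> nat \<Rightarrow> nat) \<Rightarrow> nat \<Rightarrow> nat set" where
  "scc s0 r0 nu nu' i = {j. j < s0 \<and> (species_edge s0 r0 nu nu')\<^sup>*\<^sup>* i j \<and> (species_edge s0 r0 nu nu')\<^sup>*\<^sup>* j i}"

end

theory Submission
  imports Defs
begin

lemma sup_attain:
  fixes f :: "nat \<Rightarrow> ereal"
  assumes "finite A" "A \<noteq> {}"
  shows "\<exists>k\<in>A. (SUP k\<in>A. f k) = f k"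
proof -
  have "(SUP k\<in>A. f k) = Max (f ` A)" using Max_Sup[of "f`A"] assms by simp
  moreover have "Max (f`A) \<in> f`A" using assms by (intro Max_in) auto
  ultimately show ?thesis by auto
qed

lemma exists_max:
  assumes "finite S" "S \<noteq> {}" "\<And>x y z. P x y \<Longrightarrow> P y z \<Longrightarrow> P x z" "\<And>x. \<not> P x x"
  shows "\<exists>x\<in>S. \<forall>y\<in>S. \<not> P x y"
  using assms(1,2)
proof (induction S rule: finite_ne_induct)
  case (singleton x) thus ?case using assms(4) by auto
next
  case (insert x F)
  then obtain y where y: "y\<in>F" "\<forall>z\<in>F. \<not>P y z" by auto
  show ?case
  proof (cases "P y x")
    case True
    have "\<forall>z\<in>insert x F. \<not> P x z" using y True assms(3,4) by blast
    thus ?thesis by blast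
  next
    case False thus ?thesis using y by blast
  qed
qed

lemma dotz_sum:
  assumes "\<forall>i<s0. theta i = (\<Sum>j<m. ths j i)"
  shows "dotz s0 nu nu' theta k = (\<Sum>j<m. dotz s0 nu nu' (ths j) k)"
proof -
  have "dotz s0 nu nu' theta k = (\<Sum>i<s0. \<Sum>j<m. ths j i * zeta nu nu' k i)"
    unfolding dotz_def using assms by (intro sum.cong) (auto simp: sum_distrib_right)
  also have "\<dots> = (\<Sum>j<m. \<Sum>i<s0. ths j i * zeta nu nu' k i)" by (rule sum.swap)
  finally show ?thesis by (simp add: dotz_def)
qed

lemma fin_G: "finite (Gamma_plus s0 r0 nu nu' x)" "finite (Gamma_minus s0 r0 nu nu' x)"
  by (rule finite_subset[of _ "{..<r0}"], auto simp: Gamma_plus_def Gamma_minus_def)+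

lemma scc_eq:
  assumes "i \<in> scc s0 r0 nu nu' a"
  shows "scc s0 r0 nu nu' a = scc s0 r0 nu nu' i"
  using assms unfolding scc_def by (blast intro: rtranclp_trans)

lemma scc_self: "i < s0 \<Longrightarrow> i \<in> scc s0 r0 nu nu' i"
  by (simp add: scc_def)

context
  fixes s0 r0 :: nat and nu nu' :: "nat \<Rightarrow> nat \<Rightarrow> nat"
    and alpha beta :: "nat \<Rightarrow> real" and gamma :: real
    and theta :: "nat \<Rightarrow> real" and m :: nat and ths :: "nat \<Rightarrow> nat \<Rightarrow> real" and c :: "nat \<Rightarrow> nat"
  assumes nn: "nonneg_vec s0 theta" and nns: "\<forall>j<m. nonneg_vec s0 (ths j)"
    and sm: "\<forall>i<s0. theta i = (\<Sum>j<m. ths j i)"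
    and cc: "\<forall>j<m. c j < s0 \<and> supp s0 (ths j) \<subseteq> scc s0 r0 nu nu' (c j)"
    and dist: "\<forall>j<m. \<forall>l<m. j \<noteq> l \<longrightarrow> scc s0 r0 nu nu' (c j) \<noteq> scc s0 r0 nu nu' (c l)"
begin

abbreviation "Gp \<equiv> Gamma_plus s0 r0 nu nu'"
abbreviation "Gm \<equiv> Gamma_minus s0 r0 nu nu'"
abbreviation "rh \<equiv> rho s0 nu alpha beta"
abbreviation "UU \<equiv> (\<Union>j<m. Gp (ths j) \<union> Gm (ths j))"
abbreviation "MM \<equiv> (SUP k\<in>UU. ereal (rh k))"
abbreviation "SS \<equiv> {j. j<m \<and> (\<exists>k\<in>Gp (ths j) \<union> Gm (ths j). ereal (rh k) = MM)}"
abbreviation "reach \<equiv> (species_edge s0 r0 nu nu')\<^sup>*\<^sup>*"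
abbreviation "PP j l \<equiv> j<m \<and> l<m \<and> j\<noteq>l \<and> reach (c j) (c l)"

lemma Gp_sub: "Gp theta \<subseteq> (\<Union>j<m. Gp (ths j))"
proof
  fix k assume "k \<in> Gp theta"
  hence k: "k<r0" "0 < (\<Sum>j<m. dotz s0 nu nu' (ths j) k)"
    using dotz_sum[OF sm] by (auto simp: Gamma_plus_def)
  then obtain j where "j<m" "dotz s0 nu nu' (ths j) k > 0"
    by (meson lessThan_iff not_le sum_nonpos)
  thus "k \<in> (\<Union>j<m. Gp (ths j))" using k by (auto simp: Gamma_plus_def)
qed

lemma Gm_sub: "Gm theta \<subseteq> (\<Union>j<m. Gm (ths j))"
proof
  fix k assume "k \<in> Gm theta"
  hence k: "k<r0" "0 > (\<Sum>j<m. dotz s0 nu nu' (ths j) k)"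
    using dotz_sum[OF sm] by (auto simp: Gamma_minus_def)
  then obtain j where "j<m" "dotz s0 nu nu' (ths j) k < 0"
    by (meson lessThan_iff not_le sum_nonneg)
  thus "k \<in> (\<Union>j<m. Gm (ths j))" using k by (auto simp: Gamma_minus_def)
qed

lemma edge_reach:
  assumes "j<m" "l<m" "k<r0" "dotz s0 nu nu' (ths j) k < 0" "dotz s0 nu nu' (ths l) k > 0"
  shows "reach (c j) (c l)"
proof -
  from assms(4) obtain i where i: "i<s0" "ths j i * zeta nu nu' k i < 0"
    unfolding dotz_def by (meson lessThan_iff not_le sum_nonneg)
  from assms(5) obtain i' where i': "i'<s0" "ths l i' * zeta nu nu' k i' > 0"
    unfolding dotz_def by (meson lessThan_iff not_le sum_nonpos)
  have "0 \<le> ths j i" "0 \<le> ths l i'" using nns assms(1,2) i i' by (auto simp: nonneg_vec_def)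
  hence a: "ths j i > 0" "zeta nu nu' k i < 0" "ths l i' > 0" "zeta nu nu' k i' > 0"
    using i(2) i'(2) by (auto simp: mult_less_0_iff zero_less_mult_iff)
  have "i \<in> scc s0 r0 nu nu' (c j)" using cc assms(1) i a by (auto simp: supp_def)
  hence r1: "reach (c j) i" by (simp add: scc_def)
  have "i' \<in> scc s0 r0 nu nu' (c l)" using cc assms(2) i' a by (auto simp: supp_def)
  hence r2: "reach i' (c l)" by (simp add: scc_def)
  have e: "species_edge s0 r0 nu nu' i i'" using i i' a assms(3) by (auto simp: species_edge_def)
  show ?thesis using r1 r2 e by (meson rtranclp.rtrancl_into_rtrancl rtranclp_trans)
qed

lemma acyc:
  assumes "j<m" "l<m" "reach (c j) (c l)" "reach (c l) (c j)"
  shows "j = l"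
proof (rule ccontr)
  assume "j\<noteq>l"
  with dist assms have ne: "scc s0 r0 nu nu' (c j) \<noteq> scc s0 r0 nu nu' (c l)" by blast
  have "c l \<in> scc s0 r0 nu nu' (c j)" using assms cc by (auto simp: scc_def)
  with ne scc_eq show False by metis
qed

lemma PP_trans: "PP x y \<Longrightarrow> PP y z \<Longrightarrow> PP x z"
  using acyc by (meson rtranclp_trans)

lemma upper: "k \<in> UU \<Longrightarrow> ereal (rh k) \<le> MM"
  by (rule SUP_upper)

lemma finU: "finite UU" using fin_G by auto

lemma S_ne: assumes "UU \<noteq> {}" shows "SS \<noteq> {}"
proof -
  obtain k0 where k0: "k0\<in>UU" "MM = ereal (rh k0)" using sup_attain[OF finU assms] by blast
  then show ?thesis by auto
qed

lemma B_theta: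
  assumes "\<forall>j\<in>SS. balance_eq s0 r0 nu nu' alpha beta (ths j)"
  shows "balance_eq s0 r0 nu nu' alpha beta theta"
proof (cases "UU = {}")
  case True
  then have "Gp theta = {}" "Gm theta = {}" using Gp_sub Gm_sub by auto
  thus ?thesis by (simp add: balance_eq_def)
next
  case False
  obtain k0 where k0: "k0\<in>UU" "MM = ereal (rh k0)" using sup_attain[OF finU False] by blast
  have Sne: "SS \<noteq> {}" using S_ne False by blast
  have finS: "finite SS" by (rule finite_subset[of _ "{..<m}"]) auto
  have eqM: "(SUP k\<in>Gp (ths j). ereal (rh k)) = MM \<and> (SUP k\<in>Gm (ths j). ereal (rh k)) = MM"
    if "j\<in>SS" for j
  proof -
    from that obtain k where jk: "j<m" "k\<in> Gp (ths j) \<union> Gm (ths j)" "ereal (rh k) = MM" by auto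
    have le1: "(SUP k\<in>Gp (ths j). ereal (rh k)) \<le> MM"
      by (rule SUP_least, rule upper) (use jk in auto)
    have le2: "(SUP k\<in>Gm (ths j). ereal (rh k)) \<le> MM"
      by (rule SUP_least, rule upper) (use jk in auto)
    have "MM \<le> (SUP k\<in>Gp (ths j) \<union> Gm (ths j). ereal (rh k))"
      using jk by (metis SUP_upper)
    hence ge: "MM \<le> sup (SUP k\<in>Gp (ths j). ereal (rh k)) (SUP k\<in>Gm (ths j). ereal (rh k))"
      by (simp add: SUP_union)
    have eq: "(SUP k\<in>Gp (ths j). ereal (rh k)) = (SUP k\<in>Gm (ths j). ereal (rh k))"
      using assms that by (simp add: balance_eq_def)
    have "MM \<le> (SUP k\<in>Gp (ths j). ereal (rh k))" using ge unfolding eq by simp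
    hence "(SUP k\<in>Gp (ths j). ereal (rh k)) = MM" using le1 by (rule_tac antisym)
    then show ?thesis using eq by simp
  qed
  obtain j1 where j1: "j1\<in>SS" "\<forall>l\<in>SS. \<not> PP j1 l"
    using exists_max[OF finS Sne, of PP] PP_trans by blast
  obtain j2 where j2: "j2\<in>SS" "\<forall>l\<in>SS. \<not> PP l j2"
    using exists_max[OF finS Sne, of "\<lambda>x y. PP y x"] PP_trans by blast
  have lowm: "MM \<le> (SUP k\<in>Gm theta. ereal (rh k))"
  proof -
    have e1: "(SUP k\<in>Gm (ths j1). ereal (rh k)) = MM" using eqM j1 by blast
    have "Gm (ths j1) \<noteq> {}"
    proof
      assume "Gm (ths j1) = {}"
      hence "MM = bot" using e1 by simp
      thus False using k0(2) by (simp add: bot_ereal_def)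
    qed
    then obtain k where k: "k \<in> Gm (ths j1)" "(SUP k\<in>Gm (ths j1). ereal (rh k)) = ereal (rh k)"
      using sup_attain[OF fin_G(2)] by blast
    have kM: "ereal (rh k) = MM" using k e1 by simp
    have kr: "k<r0" "dotz s0 nu nu' (ths j1) k < 0" using k by (auto simp: Gamma_minus_def)
    have j1m: "j1 < m" using j1 by auto
    have nonp: "dotz s0 nu nu' (ths l) k \<le> 0" if "l<m" for l
    proof (rule ccontr)
      assume "\<not> dotz s0 nu nu' (ths l) k \<le> 0"
      hence pos: "dotz s0 nu nu' (ths l) k > 0" by simp
      hence "k \<in> Gp (ths l)" using kr by (auto simp: Gamma_plus_def)
      hence "l \<in> SS" using kM that by auto
      moreover have "l \<noteq> j1" using pos kr by auto
      moreover have "reach (c j1) (c l)" using edge_reach[OF j1m that kr pos] .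
      ultimately show False using j1 j1m that by blast
    qed
    have "dotz s0 nu nu' theta k = (\<Sum>l<m. dotz s0 nu nu' (ths l) k)" using dotz_sum[OF sm] .
    also have "\<dots> = dotz s0 nu nu' (ths j1) k + (\<Sum>l\<in>{..<m}-{j1}. dotz s0 nu nu' (ths l) k)"
      using j1m by (simp add: sum.remove)
    also have "\<dots> < 0" using kr nonp by (smt (verit) Diff_iff lessThan_iff sum_nonpos)
    finally have "k \<in> Gm theta" using kr by (auto simp: Gamma_minus_def)
    thus ?thesis using kM by (metis SUP_upper)
  qed
  have lowp: "MM \<le> (SUP k\<in>Gp theta. ereal (rh k))"
  proof -
    have e1: "(SUP k\<in>Gp (ths j2). ereal (rh k)) = MM" using eqM j2 by blast
    have "Gp (ths j2) \<noteq> {}"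
    proof
      assume "Gp (ths j2) = {}"
      hence "MM = bot" using e1 by simp
      thus False using k0(2) by (simp add: bot_ereal_def)
    qed
    then obtain k where k: "k \<in> Gp (ths j2)" "(SUP k\<in>Gp (ths j2). ereal (rh k)) = ereal (rh k)"
      using sup_attain[OF fin_G(1)] by blast
    have kM: "ereal (rh k) = MM" using k e1 by simp
    have kr: "k<r0" "dotz s0 nu nu' (ths j2) k > 0" using k by (auto simp: Gamma_plus_def)
    have j2m: "j2 < m" using j2 by auto
    have nonp: "dotz s0 nu nu' (ths l) k \<ge> 0" if "l<m" for l
    proof (rule ccontr)
      assume "\<not> dotz s0 nu nu' (ths l) k \<ge> 0"
      hence neg: "dotz s0 nu nu' (ths l) k < 0" by simp
      hence "k \<in> Gm (ths l)" using kr by (auto simp: Gamma_minus_def)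
      hence "l \<in> SS" using kM that by auto
      moreover have "l \<noteq> j2" using neg kr by auto
      moreover have "reach (c l) (c j2)" using edge_reach[OF that j2m kr(1) neg kr(2)] .
      ultimately show False using j2 j2m that by blast
    qed
    have "dotz s0 nu nu' theta k = (\<Sum>l<m. dotz s0 nu nu' (ths l) k)" using dotz_sum[OF sm] .
    also have "\<dots> = dotz s0 nu nu' (ths j2) k + (\<Sum>l\<in>{..<m}-{j2}. dotz s0 nu nu' (ths l) k)"
      using j2m by (simp add: sum.remove)
    also have "\<dots> > 0" using kr nonp by (smt (verit) Diff_iff lessThan_iff sum_nonneg)
    finally have "k \<in> Gp theta" using kr by (auto simp: Gamma_plus_def)
    thus ?thesis using kM by (metis SUP_upper)
  qed
  have upm: "(SUP k\<in>Gm theta. ereal (rh k)) \<le> MM"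
    by (rule SUP_least, rule upper) (use Gm_sub in auto)
  have upp: "(SUP k\<in>Gp theta. ereal (rh k)) \<le> MM"
    by (rule SUP_least, rule upper) (use Gp_sub in auto)
  show ?thesis using lowm lowp upm upp by (simp add: balance_eq_def)
qed

lemma T_theta:
  assumes "j\<in>SS" "time_scale s0 r0 nu nu' alpha beta gamma (ths j)"
  shows "time_scale s0 r0 nu nu' alpha beta gamma theta"
proof -
  from assms obtain k where jk: "j<m" "k\<in> Gp (ths j) \<union> Gm (ths j)" "ereal (rh k) = MM" by auto
  have a: "MM \<le> (SUP k\<in>Gp (ths j) \<union> Gm (ths j). ereal (rh k))"
    using jk by (metis SUP_upper)
  have b: "(SUP k\<in>Gp theta \<union> Gm theta. ereal (rh k)) \<le> MM"
    by (rule SUP_least, rule upper) (use Gm_sub Gp_sub in auto)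
  have "supp s0 (ths j) \<subseteq> supp s0 theta"
  proof
    fix i assume "i \<in> supp s0 (ths j)"
    hence i: "i<s0" "ths j i > 0" by (auto simp: supp_def)
    have "ths j i \<le> (\<Sum>l<m. ths l i)"
      by (rule member_le_sum) (use jk nns i in \<open>auto simp: nonneg_vec_def\<close>)
    thus "i \<in> supp s0 theta" using sm i by (auto simp: supp_def)
  qed
  hence c: "(SUP i\<in>supp s0 (ths j). ereal (alpha i)) \<le> (SUP i\<in>supp s0 theta. ereal (alpha i))"
    by (rule SUP_subset_mono) simp
  have "ereal gamma \<le> (SUP i\<in>supp s0 (ths j). ereal (alpha i)) - (SUP k\<in>Gp (ths j) \<union> Gm (ths j). ereal (rh k))"
    using assms(2) by (simp add: time_scale_def)
  also have "\<dots> \<le> (SUP i\<in>supp s0 theta. ereal (alpha i)) - (SUP k\<in>Gp theta \<union> Gm theta. ereal (rh k))"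
    using a b c by (intro ereal_minus_mono) auto
  finally show ?thesis by (simp add: time_scale_def)
qed

lemma T0:
  assumes "UU = {}"
  shows "time_scale s0 r0 nu nu' alpha beta gamma theta"
proof -
  have "Gp theta = {}" "Gm theta = {}" using Gp_sub Gm_sub assms by auto
  thus ?thesis by (simp add: time_scale_def bot_ereal_def)
qed

lemma part1:
  "((\<forall>j<m. cond32 s0 r0 nu nu' alpha beta gamma (ths j))
            \<longrightarrow> cond32 s0 r0 nu nu' alpha beta gamma theta)
       \<and> ((\<forall>j<m. balance_eq s0 r0 nu nu' alpha beta (ths j))
            \<longrightarrow> balance_eq s0 r0 nu nu' alpha beta theta)
       \<and> ((\<forall>j<m. time_scale s0 r0 nu nu' alpha beta gamma (ths j))
            \<longrightarrow> time_scale s0 r0 nu nu' alpha beta gamma theta)"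
proof (intro conjI impI)
  assume h: "\<forall>j<m. cond32 s0 r0 nu nu' alpha beta gamma (ths j)"
  show "cond32 s0 r0 nu nu' alpha beta gamma theta"
  proof (cases "\<forall>j\<in>SS. balance_eq s0 r0 nu nu' alpha beta (ths j)")
    case True thus ?thesis using B_theta by (simp add: cond32_def)
  next
    case False
    then obtain j where "j \<in> SS" "\<not> balance_eq s0 r0 nu nu' alpha beta (ths j)" by blast
    moreover hence "time_scale s0 r0 nu nu' alpha beta gamma (ths j)" using h by (auto simp: cond32_def)
    ultimately show ?thesis using T_theta by (simp add: cond32_def)
  qed
next
  assume "\<forall>j<m. balance_eq s0 r0 nu nu' alpha beta (ths j)"
  thus "balance_eq s0 r0 nu nu' alpha beta theta" using B_theta by auto
next
  assume h: "\<forall>j<m. time_scale s0 r0 nu nu' alpha beta gamma (ths j)"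
  show "time_scale s0 r0 nu nu' alpha beta gamma theta"
  proof (cases "UU = {}")
    case True thus ?thesis using T0 by blast
  next
    case False
    then obtain j where "j \<in> SS" using S_ne by blast
    thus ?thesis using h T_theta by auto
  qed
qed

end

lemma decomp:
  assumes "nonneg_vec s0 theta"
  shows "\<exists>(m::nat) ths c. (\<forall>j<m. nonneg_vec s0 (ths j))
       \<and> (\<forall>i<s0. theta i = (\<Sum>j<m. ths j i))
       \<and> (\<forall>j<m. c j < s0 \<and> supp s0 (ths j) \<subseteq> scc s0 r0 nu nu' (c j))
       \<and> (\<forall>j<m. \<forall>l<m. j \<noteq> l \<longrightarrow> scc s0 r0 nu nu' (c j) \<noteq> scc s0 r0 nu nu' (c l))"
proof -
  define C where "C = scc s0 r0 nu nu' ` {..<s0}"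
  have "finite C" by (simp add: C_def)
  then obtain f where f: "bij_betw f {0..<card C} C" using ex_bij_betw_nat_finite by blast
  define m where "m = card C"
  define c where "c j = (SOME i. i<s0 \<and> scc s0 r0 nu nu' i = f j)" for j
  define ths where "ths j i = (if i \<in> f j then theta i else 0)" for j i
  have cj: "c j < s0 \<and> scc s0 r0 nu nu' (c j) = f j" if "j<m" for j
  proof -
    have "f j \<in> C" using f that by (auto simp: m_def bij_betw_def)
    hence "\<exists>i. i<s0 \<and> scc s0 r0 nu nu' i = f j" by (auto simp: C_def)
    thus ?thesis unfolding c_def by (rule someI_ex)
  qed
  have injf: "inj_on f {..<m}" using f by (auto simp: m_def bij_betw_def atLeast0LessThan)
  have "\<forall>j<m. nonneg_vec s0 (ths j)" using assms by (auto simp: nonneg_vec_def ths_def)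
  moreover have "\<forall>i<s0. theta i = (\<Sum>j<m. ths j i)"
  proof (intro allI impI)
    fix i assume i: "i<s0"
    have "scc s0 r0 nu nu' i \<in> C" using i by (simp add: C_def)
    then obtain j0 where j0: "j0<m" "f j0 = scc s0 r0 nu nu' i"
      using f unfolding m_def bij_betw_def atLeast0LessThan by (metis imageE lessThan_iff)
    have "ths j i = (if j = j0 then theta i else 0)" if "j<m" for j
    proof -
      have "(i \<in> f j) = (f j = f j0)"
        using cj[OF that] j0 scc_eq[of i s0 r0 nu nu'] scc_self[OF i, of r0 nu nu'] by metis
      also have "\<dots> = (j = j0)" using injf that j0 by (auto dest: inj_onD)
      finally show ?thesis by (simp add: ths_def)
    qed
    hence "(\<Sum>j<m. ths j i) = (\<Sum>j<m. if j = j0 then theta i else 0)" by simp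
    also have "\<dots> = theta i" using j0 by simp
    finally show "theta i = (\<Sum>j<m. ths j i)" by simp
  qed
  moreover have "\<forall>j<m. c j < s0 \<and> supp s0 (ths j) \<subseteq> scc s0 r0 nu nu' (c j)"
    using cj by (auto simp: supp_def ths_def split: if_splits)
  moreover have "\<forall>j<m. \<forall>l<m. j \<noteq> l \<longrightarrow> scc s0 r0 nu nu' (c j) \<noteq> scc s0 r0 nu nu' (c l)"
    using cj injf by (metis inj_onD lessThan_iff)
  ultimately have H: "(\<forall>j<m. nonneg_vec s0 (ths j))
       \<and> (\<forall>i<s0. theta i = (\<Sum>j<m. ths j i))
       \<and> (\<forall>j<m. c j < s0 \<and> supp s0 (ths j) \<subseteq> scc s0 r0 nu nu' (c j))
       \<and> (\<forall>j<m. \<forall>l<m. j \<noteq> l \<longrightarrow> scc s0 r0 nu nu' (c j) \<noteq> scc s0 r0 nu nu' (c l))" by blast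
  show ?thesis
    by (rule exI, rule exI, rule exI, rule H)
qed

theorem lemma3p4:
  fixes s0 r0 :: nat and nu nu' :: "nat \<Rightarrow> nat \<Rightarrow> nat"
    and alpha beta :: "nat \<Rightarrow> real" and gamma :: real
  assumes "1 \<le> s0" and "1 \<le> r0"
    and "\<forall>i<s0. 0 \<le> alpha i"
  shows
   "(\<forall>(theta :: nat \<Rightarrow> real) (m :: nat) (thetas :: nat \<Rightarrow> nat \<Rightarrow> real).
       nonneg_vec s0 theta \<and> (\<forall>j<m. nonneg_vec s0 (thetas j))
       \<and> (\<forall>i<s0. theta i = (\<Sum>j<m. thetas j i))
       \<and> (\<exists>c :: nat \<Rightarrow> nat.
            (\<forall>j<m. c j < s0 \<and> supp s0 (thetas j) \<subseteq> scc s0 r0 nu nu' (c j))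
          \<and> (\<forall>j<m. \<forall>l<m. j \<noteq> l \<longrightarrow> scc s0 r0 nu nu' (c j) \<noteq> scc s0 r0 nu nu' (c l)))
     \<longrightarrow> ((\<forall>j<m. cond32 s0 r0 nu nu' alpha beta gamma (thetas j))
            \<longrightarrow> cond32 s0 r0 nu nu' alpha beta gamma theta)
       \<and> ((\<forall>j<m. balance_eq s0 r0 nu nu' alpha beta (thetas j))
            \<longrightarrow> balance_eq s0 r0 nu nu' alpha beta theta)
       \<and> ((\<forall>j<m. time_scale s0 r0 nu nu' alpha beta gamma (thetas j))
            \<longrightarrow> time_scale s0 r0 nu nu' alpha beta gamma theta))
  \<and> ((\<forall>theta. nonneg_vec s0 theta \<and> (\<exists>i<s0. supp s0 theta \<subseteq> scc s0 r0 nu nu' i)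
         \<longrightarrow> cond32 s0 r0 nu nu' alpha beta gamma theta)
      \<longrightarrow> (\<forall>theta. nonneg_vec s0 theta \<longrightarrow> cond32 s0 r0 nu nu' alpha beta gamma theta))
  \<and> ((\<forall>theta. nonneg_vec s0 theta \<and> (\<exists>i<s0. supp s0 theta \<subseteq> scc s0 r0 nu nu' i)
         \<longrightarrow> balance_eq s0 r0 nu nu' alpha beta theta)
      \<longrightarrow> (\<forall>theta. nonneg_vec s0 theta \<longrightarrow> balance_eq s0 r0 nu nu' alpha beta theta))
  \<and> ((\<forall>theta. nonneg_vec s0 theta \<and> (\<exists>i<s0. supp s0 theta \<subseteq> scc s0 r0 nu nu' i)
         \<longrightarrow> time_scale s0 r0 nu nu' alpha beta gamma theta)
      \<longrightarrow> (\<forall>theta. nonneg_vec s0 theta \<longrightarrow> time_scale s0 r0 nu nu' alpha beta gamma theta))"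
proof (intro conjI)
  show "\<forall>(theta :: nat \<Rightarrow> real) (m :: nat) (thetas :: nat \<Rightarrow> nat \<Rightarrow> real).
       nonneg_vec s0 theta \<and> (\<forall>j<m. nonneg_vec s0 (thetas j))
       \<and> (\<forall>i<s0. theta i = (\<Sum>j<m. thetas j i))
       \<and> (\<exists>c :: nat \<Rightarrow> nat.
            (\<forall>j<m. c j < s0 \<and> supp s0 (thetas j) \<subseteq> scc s0 r0 nu nu' (c j))
          \<and> (\<forall>j<m. \<forall>l<m. j \<noteq> l \<longrightarrow> scc s0 r0 nu nu' (c j) \<noteq> scc s0 r0 nu nu' (c l)))
     \<longrightarrow> ((\<forall>j<m. cond32 s0 r0 nu nu' alpha beta gamma (thetas j))
            \<longrightarrow> cond32 s0 r0 nu nu' alpha beta gamma theta)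
       \<and> ((\<forall>j<m. balance_eq s0 r0 nu nu' alpha beta (thetas j))
            \<longrightarrow> balance_eq s0 r0 nu nu' alpha beta theta)
       \<and> ((\<forall>j<m. time_scale s0 r0 nu nu' alpha beta gamma (thetas j))
            \<longrightarrow> time_scale s0 r0 nu nu' alpha beta gamma theta)"
    apply (intro allI impI)
    apply (elim conjE exE)
    apply (rule part1)
        apply assumption+
    done
next
  show "(\<forall>theta. nonneg_vec s0 theta \<and> (\<exists>i<s0. supp s0 theta \<subseteq> scc s0 r0 nu nu' i)
         \<longrightarrow> cond32 s0 r0 nu nu' alpha beta gamma theta)
      \<longrightarrow> (\<forall>theta. nonneg_vec s0 theta \<longrightarrow> cond32 s0 r0 nu nu' alpha beta gamma theta)"
  proof (intro impI allI)
    fix theta assume h: "\<forall>theta. nonneg_vec s0 theta \<and> (\<exists>i<s0. supp s0 theta \<subseteq> scc s0 r0 nu nu' i)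
         \<longrightarrow> cond32 s0 r0 nu nu' alpha beta gamma theta" and nt: "nonneg_vec s0 theta"
    obtain m :: nat and ths c where d: "\<forall>j<m. nonneg_vec s0 (ths j)" "\<forall>i<s0. theta i = (\<Sum>j<m. ths j i)"
       "\<forall>j<m. c j < s0 \<and> supp s0 (ths j) \<subseteq> scc s0 r0 nu nu' (c j)"
       "\<forall>j<m. \<forall>l<m. j \<noteq> l \<longrightarrow> scc s0 r0 nu nu' (c j) \<noteq> scc s0 r0 nu nu' (c l)"
      using decomp[OF nt, of r0 nu nu'] by blast
    have "\<forall>j<m. cond32 s0 r0 nu nu' alpha beta gamma (ths j)" using h d(1,3) by blast
    thus "cond32 s0 r0 nu nu' alpha beta gamma theta" using part1[OF nt d] by blast
  qed
next
  show "(\<forall>theta. nonneg_vec s0 theta \<and> (\<exists>i<s0. supp s0 theta \<subseteq> scc s0 r0 nu nu' i)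
         \<longrightarrow> balance_eq s0 r0 nu nu' alpha beta theta)
      \<longrightarrow> (\<forall>theta. nonneg_vec s0 theta \<longrightarrow> balance_eq s0 r0 nu nu' alpha beta theta)"
  proof (intro impI allI)
    fix theta assume h: "\<forall>theta. nonneg_vec s0 theta \<and> (\<exists>i<s0. supp s0 theta \<subseteq> scc s0 r0 nu nu' i)
         \<longrightarrow> balance_eq s0 r0 nu nu' alpha beta theta" and nt: "nonneg_vec s0 theta"
    obtain m :: nat and ths c where d: "\<forall>j<m. nonneg_vec s0 (ths j)" "\<forall>i<s0. theta i = (\<Sum>j<m. ths j i)"
       "\<forall>j<m. c j < s0 \<and> supp s0 (ths j) \<subseteq> scc s0 r0 nu nu' (c j)"
       "\<forall>j<m. \<forall>l<m. j \<noteq> l \<longrightarrow> scc s0 r0 nu nu' (c j) \<noteq> scc s0 r0 nu nu' (c l)"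
      using decomp[OF nt, of r0 nu nu'] by blast
    have "\<forall>j<m. balance_eq s0 r0 nu nu' alpha beta (ths j)" using h d(1,3) by blast
    thus "balance_eq s0 r0 nu nu' alpha beta theta" using part1[OF nt d, of alpha beta gamma] by blast
  qed
next
  show "(\<forall>theta. nonneg_vec s0 theta \<and> (\<exists>i<s0. supp s0 theta \<subseteq> scc s0 r0 nu nu' i)
         \<longrightarrow> time_scale s0 r0 nu nu' alpha beta gamma theta)
      \<longrightarrow> (\<forall>theta. nonneg_vec s0 theta \<longrightarrow> time_scale s0 r0 nu nu' alpha beta gamma theta)"
  proof (intro impI allI)
    fix theta assume h: "\<forall>theta. nonneg_vec s0 theta \<and> (\<exists>i<s0. supp s0 theta \<subseteq> scc s0 r0 nu nu' i)
         \<longrightarrow> time_scale s0 r0 nu nu' alpha beta gamma theta" and nt: "nonneg_vec s0 theta"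
    obtain m :: nat and ths c where d: "\<forall>j<m. nonneg_vec s0 (ths j)" "\<forall>i<s0. theta i = (\<Sum>j<m. ths j i)"
       "\<forall>j<m. c j < s0 \<and> supp s0 (ths j) \<subseteq> scc s0 r0 nu nu' (c j)"
       "\<forall>j<m. \<forall>l<m. j \<noteq> l \<longrightarrow> scc s0 r0 nu nu' (c j) \<noteq> scc s0 r0 nu nu' (c l)"
      using decomp[OF nt, of r0 nu nu'] by blast
    have "\<forall>j<m. time_scale s0 r0 nu nu' alpha beta gamma (ths j)" using h d(1,3) by blast
    thus "time_scale s0 r0 nu nu' alpha beta gamma theta" using part1[OF nt d] by blast
  qed
qed
end
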